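(* Let $\mu$ be a probability measure on $\partial\mathbb{D}$ and $\{\Phi_n\}_{n=0}^N$ its monic orthogonal polynomials, where $N=\infty$ if $\mu$ has infinite support and $N=\#\mathrm{supp}(\mu)$ otherwise. Let $z_0$ be an isolated point of $\mathrm{supp}(\mu)$ and $d=\mathrm{dist}(z_0,\mathrm{supp}(\mu)\setminus\{z_0\})$. Then for each $n<N$, the disk $\{z:|z-z_0|<d^2/4\}$ contains at most one zero of $\Phi_n$.
   Context: $\Phi_n$ is the monic polynomial of degree $n$ orthogonal in $L^2(\mu)$ to all polynomials of degree less than $n$. *)

theory Defs
  imports "HOL-Probability.Probability" "HOL-Computational_Algebra.Polynomial"
begin

definition circle_prob_measure :: "complex measure \<Rightarrow> bool" where
  "circle_prob_measure M \<longleftrightarrow> prob_space M \<and> sets M = sets borel \<and>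
     emeasure M {z. cmod z \<noteq> 1} = 0"

definition msupp :: "complex measure \<Rightarrow> complex set" where
  "msupp M = {z. \<forall>e>0. emeasure M (ball z e) > 0}"

definition monic_OP :: "complex measure \<Rightarrow> nat \<Rightarrow> complex poly \<Rightarrow> bool" where
  "monic_OP M n p \<longleftrightarrow> degree p = n \<and> lead_coeff p = 1 \<and>
     (\<forall>q :: complex poly. degree q < n \<longrightarrow>
        integral\<^sup>L M (\<lambda>z. poly p z * cnj (poly q z)) = 0)"

end

theory Submission
  imports Defs
begin


lemma cpm_space: "circle_prob_measure M \<Longrightarrow> space M = UNIV"
  unfolding circle_prob_measure_def by (metis sets_eq_imp_space_eq space_borel)

lemma cpm_prob: "circle_prob_measure M \<Longrightarrow> prob_space M"
  unfolding circle_prob_measure_def by blast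

lemma cpm_AE_circle:
  assumes "circle_prob_measure M" shows "AE z in M. cmod z = 1"
proof (rule AE_I')
  have s: "sets M = sets borel" using assms unfolding circle_prob_measure_def by blast
  have "{z::complex. cmod z \<noteq> 1} \<in> sets borel" by measurable
  then show "{z::complex. cmod z \<noteq> 1} \<in> null_sets M"
    using assms s unfolding circle_prob_measure_def null_sets_def by auto
qed auto

lemma cpm_meas:
  assumes "circle_prob_measure M" "continuous_on UNIV (f :: complex \<Rightarrow> 'b::topological_space)"
  shows "f \<in> borel_measurable M"
proof -
  have s: "sets M = sets borel" using assms unfolding circle_prob_measure_def by blast
  show ?thesis using borel_measurable_continuous_onI[OF assms(2)] measurable_cong_sets[OF s refl] by blast
qed

lemma cpm_integrable:
  assumes "circle_prob_measure M" "continuous_on UNIV (f :: complex \<Rightarrow> complex)"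
  shows "integrable M f"
proof -
  interpret prob_space M using cpm_prob[OF assms(1)] .
  have "compact (f ` cball 0 1)"
    by (rule compact_continuous_image) (use assms(2) continuous_on_subset in auto)
  then obtain B where B: "\<And>x. x \<in> f ` cball 0 1 \<Longrightarrow> norm x \<le> B"
    using compact_imp_bounded bounded_iff by metis
  have "AE z in M. norm (f z) \<le> B"
    using cpm_AE_circle[OF assms(1)] by eventually_elim (auto intro: B)
  then show ?thesis by (rule integrable_const_bound) (rule cpm_meas[OF assms])
qed

lemma cpm_null_open:
  assumes "circle_prob_measure M" "open U" "\<And>x. x \<in> U \<Longrightarrow> x \<notin> msupp M"
  shows "U \<in> null_sets M"
proof -
  have s: "sets M = sets borel" using assms unfolding circle_prob_measure_def by blast
  have "\<forall>x\<in>U. \<exists>e>0. ball x e \<subseteq> U \<and> emeasure M (ball x e) = 0"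
  proof
    fix x assume x: "x \<in> U"
    obtain e1 where e1: "e1 > 0" "ball x e1 \<subseteq> U" using assms(2) x open_contains_ball by blast
    obtain e2 where e2: "e2 > 0" "emeasure M (ball x e2) = 0"
      using assms(3)[OF x] unfolding msupp_def by (auto simp: not_less)
    show "\<exists>e>0. ball x e \<subseteq> U \<and> emeasure M (ball x e) = 0"
    proof (intro exI[of _ "min e1 e2"] conjI)
      show "ball x (min e1 e2) \<subseteq> U" using e1 by auto
      have "emeasure M (ball x (min e1 e2)) \<le> emeasure M (ball x e2)"
        by (rule emeasure_mono) (auto simp: s)
      then show "emeasure M (ball x (min e1 e2)) = 0" using e2 by simp
    qed (use e1 e2 in auto)
  qed
  then obtain r where r: "\<And>x. x \<in> U \<Longrightarrow> r x > 0 \<and> ball x (r x) \<subseteq> U \<and> emeasure M (ball x (r x)) = 0"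
    by metis
  obtain F where F: "F \<subseteq> (\<lambda>x. ball x (r x)) ` U" "countable F" "\<Union>F = \<Union>((\<lambda>x. ball x (r x)) ` U)"
    using Lindelof[of "(\<lambda>x. ball x (r x)) ` U"] by auto
  have "\<Union>((\<lambda>x. ball x (r x)) ` U) = U" using r by force
  moreover have "(\<Union>S\<in>F. S) \<in> null_sets M"
  proof (rule null_sets_UN'[OF F(2)])
    fix S assume "S \<in> F"
    then obtain x where "x \<in> U" "S = ball x (r x)" using F(1) by auto
    then show "S \<in> null_sets M" using r[of x] s by (auto simp: null_sets_def)
  qed
  ultimately show ?thesis using F(3) by simp
qed

lemma cpm_AE_supp:
  assumes "circle_prob_measure M" shows "AE z in M. z \<in> msupp M"
proof (rule AE_I')
  have "closed (msupp M)"
    unfolding closed_def open_contains_ball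
  proof
    fix x assume "x \<in> - msupp M"
    then obtain e where e: "e > 0" "emeasure M (ball x e) = 0" unfolding msupp_def by (auto simp: not_less)
    have "ball x (e/2) \<subseteq> - msupp M"
    proof
      fix y assume y: "y \<in> ball x (e/2)"
      have "ball y (e/2) \<subseteq> ball x e" using y by (auto simp: ball_def) (smt (verit) dist_commute dist_triangle)
      hence "emeasure M (ball y (e/2)) \<le> emeasure M (ball x e)"
        using assms unfolding circle_prob_measure_def by (intro emeasure_mono) auto
      then show "y \<in> - msupp M" using e unfolding msupp_def by (auto intro!: exI[of _ "e/2"])
    qed
    then show "\<exists>e>0. ball x e \<subseteq> - msupp M" using e by (auto intro!: exI[of _ "e/2"])
  qed
  then show "- msupp M \<in> null_sets M" by (intro cpm_null_open[OF assms]) auto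
qed auto

lemma cpm_supp_circle:
  assumes "circle_prob_measure M" "z0 \<in> msupp M" shows "cmod z0 = 1"
proof (rule ccontr)
  assume ne: "cmod z0 \<noteq> 1"
  define e where "e = \<bar>cmod z0 - 1\<bar>"
  have e: "e > 0" using ne by (auto simp: e_def)
  have "ball z0 e \<subseteq> {z. cmod z \<noteq> 1}"
  proof
    fix z assume "z \<in> ball z0 e"
    hence "cmod (z0 - z) < e" by (simp add: dist_norm)
    moreover have "\<bar>cmod z0 - cmod z\<bar> \<le> cmod (z0 - z)" by (rule norm_triangle_ineq3)
    ultimately show "z \<in> {z. cmod z \<noteq> 1}" by (auto simp: e_def)
  qed
  hence "emeasure M (ball z0 e) \<le> emeasure M {z. cmod z \<noteq> 1}"
    using assms unfolding circle_prob_measure_def by (intro emeasure_mono) auto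
  hence "emeasure M (ball z0 e) = 0" using assms unfolding circle_prob_measure_def by simp
  then show False using assms(2) e unfolding msupp_def by force
qed



definition ip :: "complex measure \<Rightarrow> complex poly \<Rightarrow> complex poly \<Rightarrow> complex" where
  "ip M p q = integral\<^sup>L M (\<lambda>z. poly p z * cnj (poly q z))"

context
  fixes M assumes M: "circle_prob_measure M"
begin

lemma int_pp: "integrable M (\<lambda>z. poly p z * cnj (poly q z))"
  by (rule cpm_integrable[OF M]) (intro continuous_intros)

lemma ip_add_left: "ip M (p + q) r = ip M p r + ip M q r"
  unfolding ip_def by (simp add: distrib_right Bochner_Integration.integral_add[OF int_pp int_pp])

lemma ip_diff_left: "ip M (p - q) r = ip M p r - ip M q r"
  unfolding ip_def by (simp add: left_diff_distrib Bochner_Integration.integral_diff[OF int_pp int_pp])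

lemma ip_smult_left: "ip M (smult c p) r = c * ip M p r"
  unfolding ip_def by (simp add: mult.assoc)

lemma ip_cnj: "ip M q p = cnj (ip M p q)"
  proof -
  have "(\<lambda>z. poly q z * cnj (poly p z)) = (\<lambda>z. cnj (poly p z * cnj (poly q z)))"
    by (simp add: mult.commute)
  then show ?thesis unfolding ip_def by (simp only: Bochner_Integration.integral_cnj)
qed

lemma ip_add_right: "ip M r (p + q) = ip M r p + ip M r q"
  by (metis ip_cnj ip_add_left complex_cnj_add)

lemma ip_diff_right: "ip M r (p - q) = ip M r p - ip M r q"
  by (metis ip_cnj ip_diff_left complex_cnj_diff)

lemma ip_smult_right: "ip M r (smult c p) = cnj c * ip M r p"
  by (metis ip_cnj ip_smult_left complex_cnj_mult)

lemma ip_self: "ip M p p = of_real (integral\<^sup>L M (\<lambda>z. (cmod (poly p z))\<^sup>2))"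
  unfolding ip_def complex_norm_square[symmetric] by (rule integral_complex_of_real)

lemma ip_self_nonneg: "Re (ip M p p) \<ge> 0"
  unfolding ip_self by simp

lemma ip_self_real: "ip M p p = of_real (Re (ip M p p))"
  unfolding ip_self by simp

lemma ip_shift: "ip M (pCons 0 p) (pCons 0 q) = ip M p q"
  unfolding ip_def
proof (rule integral_cong_AE)
  show "(\<lambda>z. poly (pCons 0 p) z * cnj (poly (pCons 0 q) z)) \<in> borel_measurable M"
       "(\<lambda>z. poly p z * cnj (poly q z)) \<in> borel_measurable M"
    by (rule cpm_meas[OF M], intro continuous_intros)+
  show "AE z in M. poly (pCons 0 p) z * cnj (poly (pCons 0 q) z) = poly p z * cnj (poly q z)"
    using cpm_AE_circle[OF M]
  proof eventually_elim
    case (elim z)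
    have "z * cnj z = 1" using elim by (simp add: complex_norm_square[symmetric])
    then show ?case by simp
  qed
qed

lemma ip_pos:
  assumes "q \<noteq> 0" "infinite (msupp M) \<or> degree q < card (msupp M)"
  shows "Re (ip M q q) > 0"
proof (rule ccontr)
  assume "\<not> Re (ip M q q) > 0"
  hence "integral\<^sup>L M (\<lambda>z. (cmod (poly q z))\<^sup>2) = 0"
    using ip_self_nonneg[of q] unfolding ip_self by (simp only: Re_complex_of_real)
  moreover have "integrable M (\<lambda>z. (cmod (poly q z))\<^sup>2)"
  proof -
    have "(\<lambda>z. (cmod (poly q z))\<^sup>2) = (\<lambda>z. Re (poly q z * cnj (poly q z)))"
      by (simp only: complex_norm_square[symmetric] Re_complex_of_real)
    then show ?thesis using integrable_Re[OF int_pp[of q q]] by simp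
  qed
  ultimately have ae: "AE z in M. (cmod (poly q z))\<^sup>2 = 0"
    using integral_nonneg_eq_0_iff_AE[of M "\<lambda>z. (cmod (poly q z))\<^sup>2"] by simp
  have sub: "msupp M \<subseteq> {z. poly q z = 0}"
  proof
    fix x assume x: "x \<in> msupp M"
    show "x \<in> {z. poly q z = 0}"
    proof (rule ccontr)
      assume nz: "x \<notin> {z. poly q z = 0}"
      have op: "open {z. poly q z \<noteq> 0}"
        by (rule open_Collect_neq) (intro continuous_intros)+
      then obtain e where e: "e > 0" "ball x e \<subseteq> {z. poly q z \<noteq> 0}"
        using nz open_contains_ball by blast
      have "{z. poly q z \<noteq> 0} \<in> null_sets M"
      proof -
        have "AE z in M. z \<notin> {z. poly q z \<noteq> 0}" using ae by eventually_elim simp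
        moreover have "{z. poly q z \<noteq> 0} \<in> sets M"
          using M op unfolding circle_prob_measure_def by auto
        ultimately show ?thesis by (simp add: AE_iff_null_sets)
      qed
      hence "emeasure M (ball x e) = 0"
        using e(2) M unfolding circle_prob_measure_def
        by (metis null_sets_subset sets.Int_space_eq2 null_setsD1 sets_borel open_ball borel_open)
      then show False using x e(1) unfolding msupp_def by force
    qed
  qed
  have fin: "finite {z. poly q z = 0}" using assms(1) poly_roots_finite by blast
  have "card (msupp M) \<le> card {z. poly q z = 0}" using card_mono[OF fin sub] .
  also have "\<dots> \<le> degree q" using card_poly_roots_bound[OF assms(1)] .
  finally show False using assms(2) finite_subset[OF sub fin] by auto
qed

end


lemma cm_sq: "(cmod z)\<^sup>2 = z * cnj z" for z :: complex
  using complex_norm_square by simp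

lemma two_by_two:
  fixes a b C x y z0 :: complex and N1 N2 d :: real
  assumes N: "N1 > 0" "N2 > 0" and d: "d > 0" and z0: "cmod z0 = 1"
    and ad: "cmod (a - z0) < d" and bd: "cmod (b - z0) < d"
    and contr: "\<And>x y. (cmod (x*a+y*C))\<^sup>2*N1 + (cmod (y*b))\<^sup>2*N2 \<le> (cmod x)\<^sup>2*N1 + (cmod y)\<^sup>2*N2"
    and xy: "x \<noteq> 0 \<or> y \<noteq> 0"
  shows "cmod ((x*a+y*C)*cnj x*N1 + y*b*cnj y*N2 - z0*((cmod x)\<^sup>2*N1 + (cmod y)\<^sup>2*N2))
          < 2*d*((cmod x)\<^sup>2*N1 + (cmod y)\<^sup>2*N2)"
proof -
  define A where "A = 1 - (cmod a)\<^sup>2"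
  define B where "B = 1 - (cmod b)\<^sup>2"
  have a1: "(cmod a)\<^sup>2 \<le> 1" using contr[of 1 0] N by simp
  have b1: "(cmod C)\<^sup>2*N1 + (cmod b)\<^sup>2*N2 \<le> N2" using contr[of 0 1] by simp
  have B0: "B \<ge> 0"
  proof -
    have "(cmod C)\<^sup>2*N1 \<ge> 0" using N by simp
    hence "(cmod b)\<^sup>2 * N2 \<le> 1 * N2" using b1 by linarith
    hence "(cmod b)\<^sup>2 \<le> 1" using N(2) by (rule mult_right_le_imp_le)
    then show ?thesis unfolding B_def by simp
  qed
  have A0: "A \<ge> 0" using a1 unfolding A_def by simp
  have CA: "(cmod C)\<^sup>2*N1 \<le> A*B*N2"
  proof (cases "A > 0")
    case True
    define x' where "x' = cnj a * C / A"
    have h: "(cmod (x'*a+1*C))\<^sup>2*N1 + (cmod (1*b))\<^sup>2*N2 \<le> (cmod x')\<^sup>2*N1 + (cmod 1)\<^sup>2*N2"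
      by (rule contr)
    have e1: "x'*a + 1*C = C / A"
    proof -
      have "x'*a + C = C * (a * cnj a / A + 1)"
        unfolding x'_def using True by (simp add: field_simps)
      also have "a * cnj a = of_real (1 - A)" unfolding A_def using complex_norm_square[of a] by simp
      also have "of_real (1 - A) / of_real A + 1 = (1::complex) / of_real A" using True
        by (simp add: field_simps)
      finally show ?thesis by simp
    qed
    have e2: "(cmod x')\<^sup>2 = (cmod a)\<^sup>2 * (cmod C)\<^sup>2 / A\<^sup>2"
      unfolding x'_def using True by (simp add: norm_divide norm_mult power_divide power_mult_distrib)
    have "(cmod C)\<^sup>2 / A\<^sup>2 * N1 + (cmod b)\<^sup>2*N2 \<le> (cmod a)\<^sup>2 * (cmod C)\<^sup>2 / A\<^sup>2 * N1 + N2"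
      using h unfolding e1 e2 using True by (simp add: norm_divide power_divide)
    hence "(cmod C)\<^sup>2 * N1 * (1 - (cmod a)\<^sup>2) / A\<^sup>2 \<le> B * N2"
      unfolding B_def by (simp add: field_simps diff_divide_distrib)
    hence "(cmod C)\<^sup>2 * N1 / A \<le> B * N2"
      using True unfolding A_def[symmetric] by (simp add: power2_eq_square)
    then show ?thesis using True by (simp add: field_simps)
  next
    case False
    hence Az: "A = 0" using A0 by simp
    have "C = 0"
    proof (rule ccontr)
      assume Cn: "C \<noteq> 0"
      define t where "t = N2 / ((cmod C)\<^sup>2 * N1)"
      have tp: "t > 0" using Cn N unfolding t_def by simp
      have h: "(cmod ((t * cnj a * C)*a+1*C))\<^sup>2*N1 + (cmod (1*b))\<^sup>2*N2 \<le> (cmod (t * cnj a * C))\<^sup>2*N1 + (cmod 1)\<^sup>2*N2"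
        by (rule contr)
      have aa: "cnj a * a = 1"
      proof -
        have "a * cnj a = of_real (1 - A)" unfolding A_def using complex_norm_square[of a] by simp
        then show ?thesis using Az by (simp add: mult.commute)
      qed
      have e1: "(t * cnj a * C)*a+1*C = (t+1) * C"
      proof -
        have "(t * cnj a * C)*a+1*C = t * (cnj a * a) * C + C" by (simp add: algebra_simps)
        then show ?thesis using aa by (simp add: algebra_simps)
      qed
      have am: "cmod a = 1" using Az unfolding A_def by (simp add: abs_square_eq_1)
      have "((t+1)\<^sup>2) * ((cmod C)\<^sup>2*N1) + (cmod b)\<^sup>2*N2 \<le> t\<^sup>2 * ((cmod C)\<^sup>2*N1) + N2"
        using h unfolding e1 using tp am by (simp add: norm_mult power_mult_distrib mult.assoc)
      moreover have "(t+1)\<^sup>2 * ((cmod C)\<^sup>2*N1) = t\<^sup>2 * ((cmod C)\<^sup>2*N1) + (2*t+1) * ((cmod C)\<^sup>2*N1)"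
        by (simp add: power2_eq_square algebra_simps)
      moreover have "(cmod b)\<^sup>2*N2 \<ge> 0" using N by simp
      ultimately have "(2*t+1) * ((cmod C)\<^sup>2*N1) \<le> N2" by linarith
      moreover have "t * ((cmod C)\<^sup>2*N1) = N2" unfolding t_def using Cn N by simp
      moreover have "(cmod C)\<^sup>2*N1 > 0" using Cn N by simp
      moreover have "(2*t+1) * ((cmod C)\<^sup>2*N1) = 2 * (t * ((cmod C)\<^sup>2*N1)) + (cmod C)\<^sup>2*N1"
        by (simp add: algebra_simps)
      ultimately show False using N by linarith
    qed
    then show ?thesis using Az by simp
  qed
  have Ad: "A \<le> 2*d"
  proof -
    have "cmod z0 - cmod a \<le> cmod (a - z0)" by (metis norm_minus_commute norm_triangle_ineq2)
    hence "1 - cmod a < d" using ad z0 by simp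
    moreover have "cmod a \<le> 1" using a1 by (simp add: power_le_one_iff abs_square_le_1)
    moreover have "A = (1 - cmod a) * (1 + cmod a)" unfolding A_def by (simp add: power2_eq_square algebra_simps)
    moreover have "(1 - cmod a) * (1 + cmod a) \<le> (1 - cmod a) * 2"
      using calculation by (intro mult_left_mono) auto
    moreover have "(1 - cmod a) * 2 = 2 - 2 * cmod a" by simp
    ultimately show ?thesis by linarith
  qed
  have Bd: "B \<le> 2*d"
  proof -
    have "cmod z0 - cmod b \<le> cmod (b - z0)" by (metis norm_minus_commute norm_triangle_ineq2)
    hence "1 - cmod b < d" using bd z0 by simp
    moreover have "cmod b \<le> 1" using B0 unfolding B_def by (simp add: power_le_one_iff abs_square_le_1)
    moreover have "B = (1 - cmod b) * (1 + cmod b)" unfolding B_def by (simp add: power2_eq_square algebra_simps)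
    moreover have "(1 - cmod b) * (1 + cmod b) \<le> (1 - cmod b) * 2"
      using calculation by (intro mult_left_mono) auto
    moreover have "(1 - cmod b) * 2 = 2 - 2 * cmod b" by simp
    ultimately show ?thesis by linarith
  qed
  define X where "X = cmod x"
  define Y where "Y = cmod y"
  define G where "G = X\<^sup>2*N1 + Y\<^sup>2*N2"
  have Gp: "G > 0" using xy N unfolding G_def X_def Y_def by (auto simp: add_pos_nonneg add_nonneg_pos)
  have iden: "(x*a+y*C)*cnj x*N1 + y*b*cnj y*N2 - z0*(X\<^sup>2*N1 + Y\<^sup>2*N2)
      = (X\<^sup>2*N1) * (a - z0) + (Y\<^sup>2*N2) * (b - z0) + (y * cnj x * C * N1)"
  proof -
    have hx: "(complex_of_real (cmod x))\<^sup>2 = x * cnj x" using complex_norm_square[of x] by simp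
    have hy: "(complex_of_real (cmod y))\<^sup>2 = y * cnj y" using complex_norm_square[of y] by simp
    show ?thesis unfolding X_def Y_def by (simp add: hx hy algebra_simps)
  qed
  have t1: "cmod ((X\<^sup>2*N1) * (a - z0) + (Y\<^sup>2*N2) * (b - z0)) < d * G"
  proof -
    have "cmod ((X\<^sup>2*N1) * (a - z0) + (Y\<^sup>2*N2) * (b - z0)) \<le> (X\<^sup>2*N1) * cmod (a - z0) + (Y\<^sup>2*N2) * cmod (b - z0)"
    proof -
      have "cmod ((X\<^sup>2*N1) * (a - z0) + (Y\<^sup>2*N2) * (b - z0)) \<le> cmod ((X\<^sup>2*N1) * (a - z0)) + cmod ((Y\<^sup>2*N2) * (b - z0))"
        by (rule norm_triangle_ineq)
      also have "cmod ((X\<^sup>2*N1) * (a - z0)) = (X\<^sup>2*N1) * cmod (a - z0)"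
        using N by (simp add: norm_mult norm_power)
      also have "cmod ((Y\<^sup>2*N2) * (b - z0)) = (Y\<^sup>2*N2) * cmod (b - z0)"
        using N by (simp add: norm_mult norm_power)
      finally show ?thesis .
    qed
    also have "\<dots> < (X\<^sup>2*N1) * d + (Y\<^sup>2*N2) * d"
    proof (cases "x = 0")
      case True
      hence "y \<noteq> 0" using xy by simp
      hence "Y\<^sup>2*N2 > 0" using N unfolding Y_def by simp
      then show ?thesis using True bd unfolding X_def by (simp add: mult_strict_left_mono)
    next
      case False
      hence "X\<^sup>2*N1 > 0" using N unfolding X_def by simp
      moreover have "(Y\<^sup>2*N2) * cmod (b - z0) \<le> (Y\<^sup>2*N2) * d" using bd N by (intro mult_left_mono) auto
      moreover have "(X\<^sup>2*N1) * cmod (a - z0) < (X\<^sup>2*N1) * d"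
        using ad calculation(1) by (simp add: mult_strict_left_mono)
      ultimately show ?thesis by linarith
    qed
    finally show ?thesis unfolding G_def by (simp add: algebra_simps)
  qed
  have t2: "cmod (y * cnj x * C * N1) \<le> d * G"
  proof -
    define P where "P = X\<^sup>2*Y\<^sup>2"
    define U where "U = X\<^sup>2*N1"
    define V where "V = Y\<^sup>2*N2"
    have P0: "P \<ge> 0" unfolding P_def by simp
    have N10: "N1 \<ge> 0" "N2 \<ge> 0" using N by auto
    have eq: "cmod (y * cnj x * C * N1) = X*Y*cmod C*N1" unfolding X_def Y_def using N by (simp add: norm_mult)
    have s1: "(X*Y*cmod C*N1)\<^sup>2 = P*((cmod C)\<^sup>2*N1)*N1" unfolding P_def by (simp add: power2_eq_square)
    have s2: "P*((cmod C)\<^sup>2*N1)*N1 \<le> P*(A*B*N2)*N1"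
      by (rule mult_right_mono[OF mult_left_mono[OF CA P0] N10(1)])
    have AB: "A*B \<le> (2*d)*(2*d)" by (rule mult_mono[OF Ad Bd]) (use d A0 B0 in auto)
    have s3: "P*(A*B*N2)*N1 \<le> P*((2*d)*(2*d)*N2)*N1"
      by (rule mult_right_mono[OF mult_left_mono[OF mult_right_mono[OF AB N10(2)] P0] N10(1)])
    have s4: "P*((2*d)*(2*d)*N2)*N1 = d\<^sup>2 * (4*U*V)"
      unfolding P_def U_def V_def by (simp add: power2_eq_square mult.commute mult.left_commute)
    have GUV: "G = U + V" unfolding G_def U_def V_def ..
    have "(U + V)\<^sup>2 = (U - V)\<^sup>2 + 4*U*V" by (simp add: power2_eq_square algebra_simps)
    moreover have "(U - V)\<^sup>2 \<ge> 0" by simp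
    ultimately have "4*U*V \<le> G\<^sup>2" unfolding GUV by linarith
    hence s5: "d\<^sup>2 * (4*U*V) \<le> d\<^sup>2 * G\<^sup>2" by (rule mult_left_mono) simp
    have s6: "d\<^sup>2 * G\<^sup>2 = (d*G)\<^sup>2" by (simp add: power_mult_distrib)
    have "(X*Y*cmod C*N1)\<^sup>2 \<le> (d*G)\<^sup>2" using s1 s2 s3 s4 s5 s6 by linarith
    moreover have dG0: "0 \<le> d*G" using d Gp by simp
    ultimately have "X*Y*cmod C*N1 \<le> d*G" by (rule power2_le_imp_le)
    then show ?thesis using eq by simp
  qed
  have "cmod ((x*a+y*C)*cnj x*N1 + y*b*cnj y*N2 - z0*(X\<^sup>2*N1 + Y\<^sup>2*N2)) < 2*d*G"
    unfolding iden using t1 t2 norm_triangle_ineq[of "(X\<^sup>2*N1) * (a - z0) + (Y\<^sup>2*N2) * (b - z0)" "y * cnj x * C * N1"]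
    by linarith
  then show ?thesis unfolding G_def X_def Y_def .
qed



lemma re_circle:
  assumes "cmod z = 1" "cmod z0 = 1"
  shows "Re (cnj z0 * z) = 1 - (cmod (z - z0))\<^sup>2 / 2"
proof -
  have "(Re z)\<^sup>2 + (Im z)\<^sup>2 = 1" "(Re z0)\<^sup>2 + (Im z0)\<^sup>2 = 1" using assms by (auto simp: cmod_power2[symmetric])
  moreover have "(cmod (z - z0))\<^sup>2 = (Re z - Re z0)\<^sup>2 + (Im z - Im z0)\<^sup>2" by (simp add: cmod_power2)
  moreover have "Re (cnj z0 * z) = Re z0 * Re z + Im z0 * Im z" by simp
  moreover have "Re z * Re z0 = Re z0 * Re z" "Im z * Im z0 = Im z0 * Im z" by simp_all
  ultimately show ?thesis unfolding power2_diff by linarith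
qed

lemma xcx: "x * cnj x = complex_of_real ((cmod x)\<^sup>2)"
  using complex_norm_square[of x] by simp

lemma xcx2: "(complex_of_real (cmod x))\<^sup>2 = x * cnj x"
  using complex_norm_square[of x] by simp

lemma core:
  fixes M :: "complex measure" and n :: nat and p R :: "complex poly" and a b z0 :: complex and dl :: real
  assumes M: "circle_prob_measure M"
    and pos: "\<And>q. q \<noteq> 0 \<Longrightarrow> degree q < n \<Longrightarrow> Re (ip M q q) > 0"
    and OP: "\<And>q. degree q < n \<Longrightarrow> ip M p q = 0"
    and peq: "p = [:-a,1:] * ([:-b,1:] * R)" and degp: "degree p = n" and R0: "R \<noteq> 0"
    and z0: "cmod z0 = 1"
    and AEd: "AE z in M. z = z0 \<or> 4*dl \<le> (cmod (z - z0))\<^sup>2"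
    and dl: "dl > 0" and ad: "cmod (a - z0) < dl" and bd: "cmod (b - z0) < dl"
  shows False
proof -
  note ips = ip_add_left[OF M] ip_add_right[OF M] ip_smult_left[OF M] ip_smult_right[OF M]
     ip_diff_left[OF M] ip_diff_right[OF M]
  define f1 where "f1 = [:-b,1:] * R"
  have pf: "p = [:-a,1:] * f1" unfolding peq f1_def ..
  have degf1: "degree f1 = degree R + 1" unfolding f1_def using R0 by (subst degree_mult_eq) auto
  have f10: "f1 \<noteq> 0" unfolding f1_def using R0 by (metis mult_eq_0_iff pCons_eq_0_iff one_neq_zero)
  have degp2: "n = degree R + 2"
  proof -
    have "degree p = degree [:-a,1:] + degree f1" unfolding pf using f10 by (subst degree_mult_eq) auto
    then show ?thesis using degp degf1 by simp
  qed
  have f1n: "degree f1 < n" using degf1 degp2 by simp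
  have Rn: "degree R < n" using degp2 by simp
  define N1 where "N1 = Re (ip M f1 f1)"
  have N1p: "N1 > 0" unfolding N1_def using pos[OF f10 f1n] .
  have N1c: "ip M f1 f1 = of_real N1" unfolding N1_def by (rule ip_self_real[OF M])
  define k where "k = ip M R f1"
  define \<kappa> where "\<kappa> = k / of_real N1"
  define e where "e = R - smult \<kappa> f1"
  have en: "degree e < n" unfolding e_def using Rn f1n
    by (intro degree_diff_less le_less_trans[OF degree_smult_le]) auto
  have e0: "e \<noteq> 0"
  proof
    assume "e = 0"
    hence Req: "R = smult \<kappa> f1" unfolding e_def by simp
    show False
    proof (cases "\<kappa> = 0")
      case True then show False using Req R0 by simp
    next
      case False then have "degree R = degree f1" using Req by simp
      then show False using degf1 by simp
    qed
  qed
  define N2 where "N2 = Re (ip M e e)"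
  have N2p: "N2 > 0" unfolding N2_def using pos[OF e0 en] .
  have N2c: "ip M e e = of_real N2" unfolding N2_def by (rule ip_self_real[OF M])
  have ef: "ip M e f1 = 0" unfolding e_def \<kappa>_def k_def using N1p by (simp add: ips N1c)
  have fe: "ip M f1 e = 0" using ip_cnj[OF M, of f1 e] ef by simp
  have pf1: "ip M p f1 = 0" using OP[OF f1n] .
  have pe: "ip M p e = 0" using OP[OF en] .
  have f1p: "ip M f1 p = 0" using ip_cnj[OF M, of f1 p] pf1 by simp
  have ep: "ip M e p = 0" using ip_cnj[OF M, of e p] pe by simp
  define C where "C = 1 + (b - a) * \<kappa>"
  have shift_id: "pCons 0 (smult x f1 + smult y e) =
      smult (x*a + y*C) f1 + smult (y*b) e + smult (x - y*\<kappa>) p" for x y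
    by (rule poly_ext) (simp add: pf e_def f1_def C_def algebra_simps)
  have norm2: "ip M (smult x f1 + smult y e) (smult x f1 + smult y e) = of_real ((cmod x)\<^sup>2*N1 + (cmod y)\<^sup>2*N2)" for x y
    by (simp add: ips N1c N2c ef fe algebra_simps xcx2)
  have contr: "(cmod (x*a+y*C))\<^sup>2*N1 + (cmod (y*b))\<^sup>2*N2 \<le> (cmod x)\<^sup>2*N1 + (cmod y)\<^sup>2*N2" for x y
  proof -
    define \<gamma> where "\<gamma> = x - y*\<kappa>"
    have "ip M (pCons 0 (smult x f1 + smult y e)) (pCons 0 (smult x f1 + smult y e))
        = ip M (smult x f1 + smult y e) (smult x f1 + smult y e)" by (rule ip_shift[OF M])
    also have "ip M (pCons 0 (smult x f1 + smult y e)) (pCons 0 (smult x f1 + smult y e))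
        = of_real ((cmod (x*a+y*C))\<^sup>2*N1 + (cmod (y*b))\<^sup>2*N2) + of_real ((cmod \<gamma>)\<^sup>2) * ip M p p"
      unfolding shift_id \<gamma>_def[symmetric]
      by (simp add: ips N1c N2c ef fe pf1 pe f1p ep algebra_simps xcx2)
    finally have eqc: "of_real ((cmod (x*a+y*C))\<^sup>2*N1 + (cmod (y*b))\<^sup>2*N2) + of_real ((cmod \<gamma>)\<^sup>2) * ip M p p
        = of_real ((cmod x)\<^sup>2*N1 + (cmod y)\<^sup>2*N2)" unfolding norm2 .
    have "(cmod (x*a+y*C))\<^sup>2*N1 + (cmod (y*b))\<^sup>2*N2 + (cmod \<gamma>)\<^sup>2 * Re (ip M p p)
        = (cmod x)\<^sup>2*N1 + (cmod y)\<^sup>2*N2"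
      using arg_cong[where f=Re, OF eqc] by simp
    moreover have "(cmod \<gamma>)\<^sup>2 * Re (ip M p p) \<ge> 0" using ip_self_nonneg[OF M, of p] by simp
    ultimately show ?thesis by linarith
  qed
  define g where "g = [:-z0,1:] * R"
  define x0 where "x0 = 1 + (b - z0) * \<kappa>"
  define y0 where "y0 = b - z0"
  have gid: "g = smult x0 f1 + smult y0 e"
    by (rule poly_ext) (simp add: g_def x0_def y0_def e_def f1_def algebra_simps)
  have g0: "g \<noteq> 0" unfolding g_def using R0 by (metis mult_eq_0_iff pCons_eq_0_iff one_neq_zero)
  have xy: "x0 \<noteq> 0 \<or> y0 \<noteq> 0" using g0 gid by auto
  define G where "G = (cmod x0)\<^sup>2*N1 + (cmod y0)\<^sup>2*N2"
  define W where "W = ip M (pCons 0 g) g"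
  have Wform: "W = (x0*a+y0*C)*cnj x0*N1 + y0*b*cnj y0*N2"
    unfolding W_def gid shift_id by (simp add: ips N1c N2c ef fe pf1 pe f1p ep algebra_simps)
  have Gg: "ip M g g = of_real G" unfolding G_def gid norm2 ..
  have bound: "cmod (W - z0 * G) < 2*dl*G"
    unfolding Wform G_def
    by (rule two_by_two[OF N1p N2p dl z0 ad bd contr xy])
  have gn: "degree g < n"
  proof -
    have "degree g = degree [:-z0,1:] + degree R" unfolding g_def using R0 by (subst degree_mult_eq) auto
    then show ?thesis using degp2 by simp
  qed
  have Gp: "G > 0" using pos[OF g0 gn] Gg by simp
  have meas: "Re (cnj z0 * W) \<le> (1 - 2*dl) * G"
  proof -
    have int1: "integrable M (\<lambda>z. cnj z0 * (poly (pCons 0 g) z * cnj (poly g z)))"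
      by (rule cpm_integrable[OF M]) (intro continuous_intros)
    have int2: "integrable M (\<lambda>z. (cmod (poly g z))\<^sup>2)"
    proof -
      have "integrable M (\<lambda>z. Re (poly g z * cnj (poly g z)))"
        by (rule integrable_Re, rule cpm_integrable[OF M]) (intro continuous_intros)
      moreover have "(\<lambda>z. Re (poly g z * cnj (poly g z))) = (\<lambda>z. (cmod (poly g z))\<^sup>2)"
        by (simp add: xcx)
      ultimately show ?thesis by simp
    qed
    have cW: "cnj z0 * W = integral\<^sup>L M (\<lambda>z. cnj z0 * (poly (pCons 0 g) z * cnj (poly g z)))"
      unfolding W_def ip_def by simp
    have "Re (cnj z0 * W) = integral\<^sup>L M (\<lambda>z. Re (cnj z0 * (poly (pCons 0 g) z * cnj (poly g z))))"
      unfolding cW by (rule integral_Re[OF int1, symmetric])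
    also have "\<dots> \<le> integral\<^sup>L M (\<lambda>z. (1 - 2*dl) * (cmod (poly g z))\<^sup>2)"
    proof (rule integral_mono_AE)
      show "integrable M (\<lambda>z. Re (cnj z0 * (poly (pCons 0 g) z * cnj (poly g z))))"
        using int1 by (rule integrable_Re)
      show "integrable M (\<lambda>z. (1 - 2*dl) * (cmod (poly g z))\<^sup>2)"
        using int2 by simp
      show "AE z in M. Re (cnj z0 * (poly (pCons 0 g) z * cnj (poly g z))) \<le> (1 - 2*dl) * (cmod (poly g z))\<^sup>2"
        using AEd cpm_AE_circle[OF M]
      proof eventually_elim
        case (elim z)
        show ?case
        proof (cases "z = z0")
          case True
          then show ?thesis unfolding g_def by simp
        next
          case False
          hence d4: "4*dl \<le> (cmod (z - z0))\<^sup>2" using elim by simp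
          have e1: "cnj z0 * (poly (pCons 0 g) z * cnj (poly g z)) = (cnj z0 * z) * (poly g z * cnj (poly g z))"
            by (simp add: algebra_simps)
          have e3: "Re (w * complex_of_real r) = Re w * r" for w r by simp
          have "Re (cnj z0 * (poly (pCons 0 g) z * cnj (poly g z))) = Re (cnj z0 * z) * (cmod (poly g z))\<^sup>2"
            unfolding e1 xcx by (rule e3)
          also have "\<dots> = (1 - (cmod (z - z0))\<^sup>2 / 2) * (cmod (poly g z))\<^sup>2"
            using re_circle[OF _ z0] elim by simp
          also have "\<dots> \<le> (1 - 2*dl) * (cmod (poly g z))\<^sup>2"
            using d4 by (intro mult_right_mono) auto
          finally show ?thesis .
        qed
      qed
    qed
    also have "\<dots> = (1 - 2*dl) * Re (ip M g g)"
      using ip_self[OF M, of g] by simp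
    finally show ?thesis using Gg by simp
  qed
  have "Re (cnj z0 * W) = Re (cnj z0 * (W - z0 * G)) + G"
  proof -
    have "cnj z0 * z0 = 1" using z0 xcx[of z0] by (simp add: mult.commute)
    hence "cnj z0 * W = cnj z0 * (W - z0 * G) + of_real G" by (simp add: algebra_simps)
    then show ?thesis by simp
  qed
  moreover have "Re (cnj z0 * (W - z0 * G)) \<ge> - cmod (W - z0 * G)"
  proof -
    have "\<bar>Re (cnj z0 * (W - z0 * G))\<bar> \<le> cmod (cnj z0 * (W - z0 * G))" by (rule abs_Re_le_cmod)
    also have "\<dots> = cmod (W - z0 * G)" using z0 by (simp add: norm_mult)
    finally show ?thesis by linarith
  qed
  ultimately show False using meas bound by (simp add: algebra_simps) 
qed



lemma two_roots:
  fixes p :: "complex poly" and T :: "complex set"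
  assumes p0: "p \<noteq> 0" and fin: "finite T" and sum: "(\<Sum>z\<in>T. order z p) > 1"
    and roots: "\<And>z. z \<in> T \<Longrightarrow> poly p z = 0"
  obtains a b R where "a \<in> T" "b \<in> T" "p = [:-a,1:] * ([:-b,1:] * R)"
proof -
  obtain a where aT: "a \<in> T" and oa: "order a p \<noteq> 0"
    using sum by (metis (mono_tags, lifting) less_nat_zero_code sum.neutral)
  have "[:-a,1:] dvd p" using roots[OF aT] poly_eq_0_iff_dvd by blast
  then obtain q where pq: "p = [:-a,1:] * q" by (elim dvdE)
  have "\<exists>b\<in>T. poly q b = 0"
  proof (cases "order a p \<ge> 2")
    case True
    hence "[:-a,1:]^2 dvd p" using order_divides by blast
    then obtain r where "p = [:-a,1:]^2 * r" by (elim dvdE)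
    hence "[:-a,1:] * q = [:-a,1:] * ([:-a,1:] * r)" using pq by (metis power2_eq_square mult.assoc)
    hence "q = [:-a,1:] * r" by (subst (asm) mult_left_cancel) auto
    then show ?thesis using aT by auto
  next
    case False
    hence o1: "order a p = 1" using oa by simp
    have "(\<Sum>z\<in>T. order z p) = order a p + (\<Sum>z\<in>T-{a}. order z p)"
      using fin aT by (rule sum.remove)
    hence "(\<Sum>z\<in>T-{a}. order z p) \<noteq> 0" using sum o1 by simp
    then obtain b where bT: "b \<in> T - {a}" and ob: "order b p \<noteq> 0"
      by (metis sum.neutral)
    have "poly p b = 0" using roots bT by simp
    hence "poly q b = 0" using pq bT by simp
    then show ?thesis using bT by blast
  qed
  then obtain b where bT: "b \<in> T" and qb: "poly q b = 0" by blast
  have "[:-b,1:] dvd q" using qb poly_eq_0_iff_dvd by blast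
  then obtain R where "q = [:-b,1:] * R" by (elim dvdE)
  then show ?thesis using that aT bT pq by blast
qed

theorem theoremA2p5:
  fixes M :: "complex measure" and z0 :: complex and n :: nat and p :: "complex poly"
  assumes "circle_prob_measure M"
    and "infinite (msupp M) \<or> n < card (msupp M)"
    and "monic_OP M n p"
    and "z0 \<in> msupp M"
    and "\<exists>e>0. msupp M \<inter> ball z0 e = {z0}"
  shows "(\<Sum>z\<in>{z. poly p z = 0 \<and> cmod (z - z0) < (infdist z0 (msupp M - {z0}))\<^sup>2 / 4}.
            order z p) \<le> 1"
proof (rule ccontr)
  note M = assms(1)
  define d where "d = infdist z0 (msupp M - {z0})"
  define dl where "dl = d\<^sup>2 / 4"
  define T where "T = {z. poly p z = 0 \<and> cmod (z - z0) < dl}"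
  assume "\<not> ?thesis"
  hence sum: "(\<Sum>z\<in>T. order z p) > 1" unfolding T_def dl_def d_def by simp
  have degp: "degree p = n" and lc: "lead_coeff p = 1"
    and OP0: "\<And>q. degree q < n \<Longrightarrow> integral\<^sup>L M (\<lambda>z. poly p z * cnj (poly q z)) = 0"
    using assms(3) unfolding monic_OP_def by auto
  have p0: "p \<noteq> 0" using lc by auto
  have fin: "finite T" unfolding T_def using poly_roots_finite[OF p0] by (rule rev_finite_subset) auto
  obtain a b R where aT: "a \<in> T" and bT: "b \<in> T" and peq: "p = [:-a,1:] * ([:-b,1:] * R)"
    using two_roots[OF p0 fin sum] unfolding T_def by blast
  have R0: "R \<noteq> 0" using p0 peq by auto
  have pos: "Re (ip M q q) > 0" if "q \<noteq> 0" "degree q < n" for q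
    using ip_pos[OF M that(1)] assms(2) that(2) by auto
  have OP: "ip M p q = 0" if "degree q < n" for q
    unfolding ip_def using OP0[OF that] .
  have z0: "cmod z0 = 1" using cpm_supp_circle[OF M assms(4)] .
  have d0: "d \<ge> 0" unfolding d_def by (rule infdist_nonneg)
  have AEd: "AE z in M. z = z0 \<or> 4*dl \<le> (cmod (z - z0))\<^sup>2"
    using cpm_AE_supp[OF M]
  proof eventually_elim
    case (elim z)
    show ?case
    proof (cases "z = z0")
      case False
      hence "d \<le> dist z0 z" unfolding d_def using elim by (intro infdist_le) auto
      hence "d \<le> cmod (z - z0)" by (simp add: dist_norm norm_minus_commute)
      hence "d\<^sup>2 \<le> (cmod (z - z0))\<^sup>2" using d0 by (intro power_mono) auto
      then show ?thesis unfolding dl_def by simp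
    qed simp
  qed
  have ad: "cmod (a - z0) < dl" and bd: "cmod (b - z0) < dl" using aT bT unfolding T_def by auto
  have dl: "dl > 0" using ad by (smt (verit) norm_ge_zero)
  show False
    by (rule core[OF M pos OP peq degp R0 z0 AEd dl ad bd]) auto
qed

end
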